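(* Let $k\ge 2$ be an integer and let $G_k$ be a connected triangle-free graph with chromatic number $k$, with vertices $v_1,\dots,v_n$. Let $H_k=G_k\boxtimes K_2$ be the graph obtained from $G_k$ by replacing each vertex $v_i$ by two adjacent vertices $x_i,y_i$ and each edge $v_iv_j$ of $G_k$ by a copy of $K_4$ on $\{x_i,y_i,x_j,y_j\}$ (and no other edges). Then: (i) $W^-(H_k,K_3)=2$; (ii) for every integer $s\ge k$, the $K_3$-WORM colorings of $H_k$ using $s$ colors in which $x_1$ and $y_1$ receive the same color are in one-to-one correspondence with the proper vertex colorings of $G_k$ using $s$ colors (namely, in each such coloring every pair $\{x_i,y_i\}$ is monochromatic, and giving $v_i$ the color of $\{x_i,y_i\}$ yields the correspondence); (iii) if $k\ge 4$ and $3\le t\le k-1$, then $H_k$ admits no $K_3$-WORM coloring using exactly $t$ colors.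
   Context: A $K_3$-WORM coloring of a graph $G$ is an assignment of colors to the vertices of $G$ such that no triangle ($K_3$-subgraph) of $G$ is monochromatic or rainbow; equivalently, the three vertices of every triangle receive exactly two distinct colors. For a graph $G$ admitting such a coloring, $W^-(G,K_3)$ denotes the minimum number of colors used in a $K_3$-WORM coloring of $G$. *)

theory Defs
  imports Main "HOL-Library.FuncSet"
begin

definition simple_graph :: "'a set \<Rightarrow> ('a \<Rightarrow> 'a \<Rightarrow> bool) \<Rightarrow> bool" where
  "simple_graph V E \<longleftrightarrow> finite V \<and> (\<forall>u v. E u v \<longrightarrow> E v u) \<and> (\<forall>u. \<not> E u u)
     \<and> (\<forall>u v. E u v \<longrightarrow> u \<in> V \<and> v \<in> V)"

definition connected_graph :: "'a set \<Rightarrow> ('a \<Rightarrow> 'a \<Rightarrow> bool) \<Rightarrow> bool" where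
  "connected_graph V E \<longleftrightarrow> (\<forall>u\<in>V. \<forall>v\<in>V. (\<lambda>x y. E x y \<and> x \<in> V \<and> y \<in> V)\<^sup>*\<^sup>* u v)"

definition triangle_free :: "'a set \<Rightarrow> ('a \<Rightarrow> 'a \<Rightarrow> bool) \<Rightarrow> bool" where
  "triangle_free V E \<longleftrightarrow> \<not> (\<exists>a\<in>V. \<exists>b\<in>V. \<exists>c\<in>V. E a b \<and> E b c \<and> E a c)"

definition proper_coloring :: "'a set \<Rightarrow> ('a \<Rightarrow> 'a \<Rightarrow> bool) \<Rightarrow> ('a \<Rightarrow> nat) \<Rightarrow> bool" where
  "proper_coloring V E f \<longleftrightarrow> (\<forall>u\<in>V. \<forall>v\<in>V. E u v \<longrightarrow> f u \<noteq> f v)"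

definition chromatic_number :: "'a set \<Rightarrow> ('a \<Rightarrow> 'a \<Rightarrow> bool) \<Rightarrow> nat" where
  "chromatic_number V E = (LEAST k. \<exists>f. proper_coloring V E f \<and> f ` V \<subseteq> {..<k})"

definition worm_coloring :: "'a set \<Rightarrow> ('a \<Rightarrow> 'a \<Rightarrow> bool) \<Rightarrow> ('a \<Rightarrow> nat) \<Rightarrow> bool" where
  "worm_coloring V E c \<longleftrightarrow>
     (\<forall>a\<in>V. \<forall>b\<in>V. \<forall>d\<in>V. E a b \<and> E b d \<and> E a d \<longrightarrow> card {c a, c b, c d} = 2)"

definition worm_min :: "'a set \<Rightarrow> ('a \<Rightarrow> 'a \<Rightarrow> bool) \<Rightarrow> nat" where
  "worm_min V E = (LEAST k. \<exists>c. worm_coloring V E c \<and> card (c ` V) = k)"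

text \<open>Strong product with K2: vertex v becomes (v,True) = x_v and (v,False) = y_v.\<close>
definition sp_K2_vertices :: "'a set \<Rightarrow> ('a \<times> bool) set" where
  "sp_K2_vertices V = V \<times> (UNIV :: bool set)"

definition sp_K2_edges :: "'a set \<Rightarrow> ('a \<Rightarrow> 'a \<Rightarrow> bool) \<Rightarrow> ('a \<times> bool) \<Rightarrow> ('a \<times> bool) \<Rightarrow> bool" where
  "sp_K2_edges V E p q \<longleftrightarrow>
     (fst p = fst q \<and> fst p \<in> V \<and> snd p \<noteq> snd q) \<or> E (fst p) (fst q)"

end

theory Submission
  imports Defs
begin

lemma card3_same: "card {a, a, x::nat} = 2 \<Longrightarrow> x \<noteq> a"
  by auto

lemma card3_in: "card {a, b, x::nat} = 2 \<Longrightarrow> a \<noteq> b \<Longrightarrow> x = a \<or> x = b"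
  by (cases "x = a \<or> x = b") (auto simp: card_insert_if)

lemma edge_worm:
  assumes sg: "simple_graph V E" and w: "worm_coloring (sp_K2_vertices V) (sp_K2_edges V E) c"
    and e: "E u v"
  shows "card {c (u,True), c (u,False), c (v,b)} = 2"
proof -
  have uv: "u \<in> V" "v \<in> V" using sg e unfolding simple_graph_def by auto
  show ?thesis using w uv e unfolding worm_coloring_def sp_K2_vertices_def sp_K2_edges_def
    by (metis UNIV_I fst_conv mem_Sigma_iff snd_conv)
qed

lemma mono_prop:
  assumes sg: "simple_graph V E" and w: "worm_coloring (sp_K2_vertices V) (sp_K2_edges V E) c"
    and e: "E u v" and m: "c (u,True) = c (u,False)"
  shows "c (v,True) = c (v,False) \<and> c (v,True) \<noteq> c (u,True)"
proof -
  have e': "E v u" using sg e unfolding simple_graph_def by blast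
  have 1: "c (v,True) \<noteq> c (u,True)" using edge_worm[OF sg w e, of True] m card3_same by metis
  have 2: "c (v,False) \<noteq> c (u,True)" using edge_worm[OF sg w e, of False] m card3_same by metis
  have 3: "card {c (v,True), c (v,False), c (u,True)} = 2" using edge_worm[OF sg w e'] .
  have "c (v,True) = c (v,False)"
  proof (rule ccontr)
    assume "c (v,True) \<noteq> c (v,False)"
    then show False using card3_in[OF 3] 1 2 by auto
  qed
  then show ?thesis using 1 by auto
qed

lemma nonmono_prop:
  assumes sg: "simple_graph V E" and w: "worm_coloring (sp_K2_vertices V) (sp_K2_edges V E) c"
    and e: "E u v" and m: "c (u,True) \<noteq> c (u,False)"
  shows "c (v,True) \<noteq> c (v,False) \<and> {c (v,True), c (v,False)} = {c (u,True), c (u,False)}"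
proof -
  have e': "E v u" using sg e unfolding simple_graph_def by blast
  have nm: "c (v,True) \<noteq> c (v,False)" using mono_prop[OF sg w e'] m by auto
  have 1: "c (v,True) \<in> {c (u,True), c (u,False)}" using card3_in[OF edge_worm[OF sg w e, of True] m] by auto
  have 2: "c (v,False) \<in> {c (u,True), c (u,False)}" using card3_in[OF edge_worm[OF sg w e, of False] m] by auto
  show ?thesis using nm 1 2 m by auto
qed

lemma conn_induct:
  assumes cg: "connected_graph V E" and a: "u \<in> V" "v \<in> V" and P: "P u"
    and step: "\<And>x y. E x y \<Longrightarrow> x \<in> V \<Longrightarrow> y \<in> V \<Longrightarrow> P x \<Longrightarrow> P y"
  shows "P v"
proof -
  have "(\<lambda>x y. E x y \<and> x \<in> V \<and> y \<in> V)\<^sup>*\<^sup>* u v" using cg a unfolding connected_graph_def by blast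
  then show ?thesis
    by (induction rule: rtranclp_induct) (use P step in auto)
qed

lemma all_mono:
  assumes sg: "simple_graph V E" and cg: "connected_graph V E"
    and w: "worm_coloring (sp_K2_vertices V) (sp_K2_edges V E) c"
    and v1: "v1 \<in> V" and m: "c (v1,True) = c (v1,False)" and v: "v \<in> V"
  shows "c (v,True) = c (v,False)"
  using conn_induct[OF cg v1 v, where P="\<lambda>x. c (x,True) = c (x,False)"] m mono_prop[OF sg w]
  by blast

lemma all_nonmono:
  assumes sg: "simple_graph V E" and cg: "connected_graph V E"
    and w: "worm_coloring (sp_K2_vertices V) (sp_K2_edges V E) c"
    and v1: "v1 \<in> V" and m: "c (v1,True) \<noteq> c (v1,False)" and v: "v \<in> V"
  shows "{c (v,True), c (v,False)} = {c (v1,True), c (v1,False)}"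
proof -
  have "c (v,True) \<noteq> c (v,False) \<and> {c (v,True), c (v,False)} = {c (v1,True), c (v1,False)}"
  proof (rule conn_induct[OF cg v1 v, where P="\<lambda>x. c (x,True) \<noteq> c (x,False) \<and> {c (x,True), c (x,False)} = {c (v1,True), c (v1,False)}"])
    show "c (v1,True) \<noteq> c (v1,False) \<and> {c (v1,True), c (v1,False)} = {c (v1,True), c (v1,False)}"
      using m by simp
  next
    fix x y assume "E x y" and IH: "c (x,True) \<noteq> c (x,False) \<and> {c (x,True), c (x,False)} = {c (v1,True), c (v1,False)}"
    then show "c (y,True) \<noteq> c (y,False) \<and> {c (y,True), c (y,False)} = {c (v1,True), c (v1,False)}"
      using nonmono_prop[OF sg w \<open>E x y\<close>] by simp
  qed
  then show ?thesis by blast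
qed

lemma tri_char:
  assumes sg: "simple_graph V E" and tf: "triangle_free V E"
    and h: "sp_K2_edges V E a b" "sp_K2_edges V E b d" "sp_K2_edges V E a d"
  shows "(fst a = fst b \<and> E (fst a) (fst d)) \<or> (fst a = fst d \<and> E (fst a) (fst b))
     \<or> (fst b = fst d \<and> E (fst b) (fst a))"
proof -
  have sym: "\<And>x y. E x y \<Longrightarrow> E y x" and irr: "\<And>x. \<not> E x x"
    and inV: "\<And>x y. E x y \<Longrightarrow> x \<in> V \<and> y \<in> V"
    using sg unfolding simple_graph_def by blast+
  have notri: "\<And>x y z. E x y \<Longrightarrow> E y z \<Longrightarrow> E x z \<Longrightarrow> False"
    using tf inV unfolding triangle_free_def by blast
  obtain a1 a2 b1 b2 d1 d2 where ab: "a = (a1,a2)" "b = (b1,b2)" "d = (d1,d2)" by (cases a, cases b, cases d) auto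
  have h': "(a1 = b1 \<and> a2 \<noteq> b2) \<or> E a1 b1" "(b1 = d1 \<and> b2 \<noteq> d2) \<or> E b1 d1"
     "(a1 = d1 \<and> a2 \<noteq> d2) \<or> E a1 d1"
    using h unfolding ab sp_K2_edges_def by auto
  have "(a1 = b1 \<and> E a1 d1) \<or> (a1 = d1 \<and> E a1 b1) \<or> (b1 = d1 \<and> E b1 a1)"
  proof (cases "a1 = b1")
    case True
    then have "a2 \<noteq> b2" using h'(1) irr by auto
    moreover have "d1 \<noteq> a1"
    proof
      assume "d1 = a1"
      then have "b2 \<noteq> d2" "a2 \<noteq> d2" using h'(2,3) irr True by auto
      then show False using \<open>a2 \<noteq> b2\<close> by (cases a2; cases b2; cases d2) auto
    qed
    ultimately show ?thesis using h'(3) True by auto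
  next
    case False
    then have e1: "E a1 b1" using h'(1) by auto
    show ?thesis
    proof (cases "d1 = a1 \<or> d1 = b1")
      case True then show ?thesis using e1 sym by auto
    next
      case False
      then have "E b1 d1" "E a1 d1" using h'(2,3) by auto
      then show ?thesis using notri e1 by blast
    qed
  qed
  then show ?thesis unfolding ab by simp
qed

lemma worm_of_proper:
  assumes sg: "simple_graph V E" and tf: "triangle_free V E"
    and p: "proper_coloring V E f"
  shows "worm_coloring (sp_K2_vertices V) (sp_K2_edges V E) (\<lambda>p\<in>sp_K2_vertices V. f (fst p))"
  unfolding worm_coloring_def
proof (intro ballI impI)
  fix a b d assume in3: "a \<in> sp_K2_vertices V" "b \<in> sp_K2_vertices V" "d \<in> sp_K2_vertices V"
    and h: "sp_K2_edges V E a b \<and> sp_K2_edges V E b d \<and> sp_K2_edges V E a d"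
  have inV: "fst a \<in> V" "fst b \<in> V" "fst d \<in> V" using in3 unfolding sp_K2_vertices_def by auto
  have pr: "\<And>x y. x \<in> V \<Longrightarrow> y \<in> V \<Longrightarrow> E x y \<Longrightarrow> f x \<noteq> f y" using p unfolding proper_coloring_def by blast
  have tc: "(fst a = fst b \<and> E (fst a) (fst d)) \<or> (fst a = fst d \<and> E (fst a) (fst b))
     \<or> (fst b = fst d \<and> E (fst b) (fst a))" using tri_char[OF sg tf] h by blast
  have "card {f (fst a), f (fst b), f (fst d)} = 2"
  proof -
    have c2: "\<And>x y. x \<noteq> (y::nat) \<Longrightarrow> card {x, x, y} = 2" "\<And>x y. x \<noteq> (y::nat) \<Longrightarrow> card {x, y, x} = 2"
      "\<And>x y. x \<noteq> (y::nat) \<Longrightarrow> card {y, x, x} = 2" by (auto simp: insert_commute)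
    from tc show ?thesis
    proof (elim disjE conjE)
      assume "fst a = fst b" "E (fst a) (fst d)"
      then show ?thesis using c2(1) pr inV by metis
    next
      assume "fst a = fst d" "E (fst a) (fst b)"
      then show ?thesis using c2(2) pr inV by metis
    next
      assume "fst b = fst d" "E (fst b) (fst a)"
      then show ?thesis using c2(3) pr inV by metis
    qed
  qed
  then show "card {(\<lambda>p\<in>sp_K2_vertices V. f (fst p)) a,
     (\<lambda>p\<in>sp_K2_vertices V. f (fst p)) b, (\<lambda>p\<in>sp_K2_vertices V. f (fst p)) d} = 2"
    using in3 by simp
qed

lemma chrom_le:
  assumes fin: "finite V" and p: "proper_coloring V E f"
  shows "chromatic_number V E \<le> card (f ` V)"
proof -
  obtain h where h: "bij_betw h (f ` V) {0..<card (f ` V)}" using ex_bij_betw_finite_nat fin by blast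
  have "proper_coloring V E (h \<circ> f)" using p h unfolding proper_coloring_def bij_betw_def inj_on_def
    by auto
  moreover have "(h \<circ> f) ` V \<subseteq> {..<card (f ` V)}" using h unfolding bij_betw_def by auto
  ultimately have "\<exists>g. proper_coloring V E g \<and> g ` V \<subseteq> {..<card (f ` V)}" by blast
  then show ?thesis unfolding chromatic_number_def by (rule Least_le)
qed

lemma img_mono:
  assumes "\<forall>v\<in>V. c (v,True) = c (v,False)"
  shows "c ` sp_K2_vertices V = (\<lambda>v. c (v,True)) ` V"
proof
  show "c ` sp_K2_vertices V \<subseteq> (\<lambda>v. c (v,True)) ` V"
  proof
    fix x assume "x \<in> c ` sp_K2_vertices V"
    then obtain v b where "v \<in> V" "x = c (v,b)" unfolding sp_K2_vertices_def by auto
    then show "x \<in> (\<lambda>v. c (v,True)) ` V" using assms by (cases b) auto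
  qed
  show "(\<lambda>v. c (v,True)) ` V \<subseteq> c ` sp_K2_vertices V"
    unfolding sp_K2_vertices_def by auto
qed

lemma img_nonmono:
  assumes "\<forall>v\<in>V. {c (v,True), c (v,False)} = A"
  shows "c ` sp_K2_vertices V \<subseteq> A"
proof
  fix x assume "x \<in> c ` sp_K2_vertices V"
  then obtain v b where "v \<in> V" "x = c (v,b)" unfolding sp_K2_vertices_def by auto
  then show "x \<in> A" using assms by (cases b) auto
qed

theorem mainTheorem2:
  fixes V :: "'a set" and E :: "'a \<Rightarrow> 'a \<Rightarrow> bool" and k :: nat and v1 :: 'a
  assumes "simple_graph V E"
    and "connected_graph V E"
    and "triangle_free V E"
    and "k \<ge> 2"
    and "chromatic_number V E = k"
    and "v1 \<in> V"
  shows
    "worm_min (sp_K2_vertices V) (sp_K2_edges V E) = 2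
     \<and> (\<forall>s\<ge>k.
          (\<forall>c. worm_coloring (sp_K2_vertices V) (sp_K2_edges V E) c
               \<and> card (c ` sp_K2_vertices V) = s \<and> c (v1, True) = c (v1, False)
               \<longrightarrow> (\<forall>v\<in>V. c (v, True) = c (v, False)))
          \<and> bij_betw (\<lambda>c. \<lambda>v\<in>V. c (v, True))
              {c \<in> extensional (sp_K2_vertices V).
                 worm_coloring (sp_K2_vertices V) (sp_K2_edges V E) c
                 \<and> card (c ` sp_K2_vertices V) = s \<and> c (v1, True) = c (v1, False)}
              {f \<in> extensional V. proper_coloring V E f \<and> card (f ` V) = s})
     \<and> (k \<ge> 4 \<longrightarrow> (\<forall>t. 3 \<le> t \<and> t \<le> k - 1 \<longrightarrow>
          \<not> (\<exists>c. worm_coloring (sp_K2_vertices V) (sp_K2_edges V E) c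
                \<and> card (c ` sp_K2_vertices V) = t)))"
proof -
  note sg = assms(1) and cg = assms(2) and tf = assms(3) and v1 = assms(6)
  have sym: "\<And>x y. E x y \<Longrightarrow> E y x" and irr: "\<And>x. \<not> E x x"
    and inV: "\<And>x y. E x y \<Longrightarrow> x \<in> V \<and> y \<in> V" and fin: "finite V"
    using sg unfolding simple_graph_def by blast+
  have finS: "finite (sp_K2_vertices V)" using fin unfolding sp_K2_vertices_def by simp
  obtain u w where uw: "E u w"
  proof (rule ccontr)
    assume "\<not> thesis"
    with that have ne: "\<And>u w. \<not> E u w" by blast
    have "proper_coloring V E (\<lambda>_. 0)" using ne unfolding proper_coloring_def by blast
    moreover have "(\<lambda>_. 0::nat) ` V \<subseteq> {..<1}" by auto
    ultimately have "chromatic_number V E \<le> 1" unfolding chromatic_number_def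
      by (intro Least_le) blast
    then show False using assms(4,5) by simp
  qed
  have ge2: "2 \<le> card (c ` sp_K2_vertices V)"
    if w: "worm_coloring (sp_K2_vertices V) (sp_K2_edges V E) c" for c
  proof -
    have "{c (u,True), c (u,False), c (w,True)} \<subseteq> c ` sp_K2_vertices V"
      using inV[OF uw] unfolding sp_K2_vertices_def by auto
    then have "card {c (u,True), c (u,False), c (w,True)} \<le> card (c ` sp_K2_vertices V)"
      using finS by (intro card_mono) auto
    then show ?thesis using edge_worm[OF sg w uw] by simp
  qed
  define c0 where "c0 = (\<lambda>p::'a \<times> bool. if snd p then 0 else (1::nat))"
  have w0: "worm_coloring (sp_K2_vertices V) (sp_K2_edges V E) c0"
    unfolding worm_coloring_def
  proof (intro ballI impI)
    fix a b d assume h: "sp_K2_edges V E a b \<and> sp_K2_edges V E b d \<and> sp_K2_edges V E a d"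
    have snde: "\<And>p q. sp_K2_edges V E p q \<Longrightarrow> fst p = fst q \<Longrightarrow> snd p \<noteq> snd q"
      unfolding sp_K2_edges_def using irr by auto
    have tc: "(fst a = fst b \<and> E (fst a) (fst d)) \<or> (fst a = fst d \<and> E (fst a) (fst b))
     \<or> (fst b = fst d \<and> E (fst b) (fst a))" using tri_char[OF sg tf] h by blast
    have ne: "c0 a \<noteq> c0 b \<or> c0 a \<noteq> c0 d \<or> c0 b \<noteq> c0 d"
    proof -
      have "snd a \<noteq> snd b \<or> snd a \<noteq> snd d \<or> snd b \<noteq> snd d"
        using tc snde h by blast
      then show ?thesis unfolding c0_def by auto
    qed
    have sub: "{c0 a, c0 b, c0 d} \<subseteq> {0,1}" unfolding c0_def by auto
    have "card {c0 a, c0 b, c0 d} \<le> 2"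
      using card_mono[OF _ sub] by simp
    moreover have "2 \<le> card {c0 a, c0 b, c0 d}"
      using ne by (auto simp: card_insert_if)
    ultimately show "card {c0 a, c0 b, c0 d} = 2" by simp
  qed
  have img0: "c0 ` sp_K2_vertices V = {0,1}"
    using v1 unfolding c0_def sp_K2_vertices_def by force
  have P1: "worm_min (sp_K2_vertices V) (sp_K2_edges V E) = 2"
    unfolding worm_min_def
  proof (rule Least_equality)
    show "\<exists>c. worm_coloring (sp_K2_vertices V) (sp_K2_edges V E) c \<and> card (c ` sp_K2_vertices V) = 2"
      using w0 img0 by auto
  next
    fix y assume "\<exists>c. worm_coloring (sp_K2_vertices V) (sp_K2_edges V E) c \<and> card (c ` sp_K2_vertices V) = y"
    then show "2 \<le> y" using ge2 by blast
  qed
  have P2: "(\<forall>c. worm_coloring (sp_K2_vertices V) (sp_K2_edges V E) c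
               \<and> card (c ` sp_K2_vertices V) = s \<and> c (v1, True) = c (v1, False)
               \<longrightarrow> (\<forall>v\<in>V. c (v, True) = c (v, False)))
          \<and> bij_betw (\<lambda>c. \<lambda>v\<in>V. c (v, True))
              {c \<in> extensional (sp_K2_vertices V).
                 worm_coloring (sp_K2_vertices V) (sp_K2_edges V E) c
                 \<and> card (c ` sp_K2_vertices V) = s \<and> c (v1, True) = c (v1, False)}
              {f \<in> extensional V. proper_coloring V E f \<and> card (f ` V) = s}" for s
  proof (intro conjI)
    show "\<forall>c. worm_coloring (sp_K2_vertices V) (sp_K2_edges V E) c
               \<and> card (c ` sp_K2_vertices V) = s \<and> c (v1, True) = c (v1, False)
               \<longrightarrow> (\<forall>v\<in>V. c (v, True) = c (v, False))"
      using all_mono[OF sg cg _ v1] by blast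
    let ?D = "{c \<in> extensional (sp_K2_vertices V).
                 worm_coloring (sp_K2_vertices V) (sp_K2_edges V E) c
                 \<and> card (c ` sp_K2_vertices V) = s \<and> c (v1, True) = c (v1, False)}"
    let ?R = "{f \<in> extensional V. proper_coloring V E f \<and> card (f ` V) = s}"
    let ?F = "\<lambda>c. \<lambda>v\<in>V. c (v, True)"
    have Dmono: "\<forall>v\<in>V. c (v,True) = c (v,False)" if "c \<in> ?D" for c
      using all_mono[OF sg cg _ v1] that by blast
    have inj: "inj_on ?F ?D"
    proof (rule inj_onI)
      fix c c' assume c: "c \<in> ?D" and c': "c' \<in> ?D" and eq: "?F c = ?F c'"
      have tv: "\<forall>v\<in>V. c (v,True) = c' (v,True)"
        using eq by (metis restrict_apply')
      show "c = c'"
      proof (rule extensionalityI[of _ "sp_K2_vertices V"])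
        show "c \<in> extensional (sp_K2_vertices V)" "c' \<in> extensional (sp_K2_vertices V)"
          using c c' by auto
        fix p assume "p \<in> sp_K2_vertices V"
        then obtain v b where p: "p = (v,b)" "v \<in> V" unfolding sp_K2_vertices_def by auto
        show "c p = c' p" using tv Dmono[OF c] Dmono[OF c'] p by (cases b) auto
      qed
    qed
    have sub: "?F ` ?D \<subseteq> ?R"
    proof
      fix f assume "f \<in> ?F ` ?D"
      then obtain c where c: "c \<in> ?D" and f: "f = ?F c" by blast
      have m: "\<forall>v\<in>V. c (v,True) = c (v,False)" using Dmono[OF c] .
      have w: "worm_coloring (sp_K2_vertices V) (sp_K2_edges V E) c" using c by blast
      have "proper_coloring V E f" unfolding proper_coloring_def f
      proof (intro ballI impI)
        fix x y assume "x \<in> V" "y \<in> V" "E x y"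
        then show "(\<lambda>v\<in>V. c (v, True)) x \<noteq> (\<lambda>v\<in>V. c (v, True)) y"
          using mono_prop[OF sg w \<open>E x y\<close>] m by auto
      qed
      moreover have "f ` V = c ` sp_K2_vertices V" unfolding img_mono[OF m] f by auto
      ultimately show "f \<in> ?R" using c f by auto
    qed
    have sup: "?R \<subseteq> ?F ` ?D"
    proof
      fix f assume f: "f \<in> ?R"
      define c where "c = (\<lambda>p\<in>sp_K2_vertices V. f (fst p))"
      have w: "worm_coloring (sp_K2_vertices V) (sp_K2_edges V E) c"
        unfolding c_def using worm_of_proper[OF sg tf] f by blast
      have m: "\<forall>v\<in>V. c (v,True) = c (v,False)" unfolding c_def sp_K2_vertices_def by auto
      have "c ` sp_K2_vertices V = f ` V" unfolding img_mono[OF m]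
        unfolding c_def sp_K2_vertices_def by auto
      then have "c \<in> ?D" using w m v1 f unfolding c_def by auto
      moreover have "?F c = f"
      proof -
        have "?F c = restrict f V" unfolding c_def sp_K2_vertices_def by (auto simp: restrict_def)
        then show ?thesis using f by (simp add: extensional_restrict)
      qed
      ultimately show "f \<in> ?F ` ?D" by (intro rev_image_eqI[where x=c]) auto
    qed
    show "bij_betw ?F ?D ?R" unfolding bij_betw_def using inj sub sup by blast
  qed
  have P3: "\<not> (\<exists>c. worm_coloring (sp_K2_vertices V) (sp_K2_edges V E) c
                \<and> card (c ` sp_K2_vertices V) = t)" if "k \<ge> 4" "3 \<le> t" "t \<le> k - 1" for t
  proof
    assume "\<exists>c. worm_coloring (sp_K2_vertices V) (sp_K2_edges V E) c \<and> card (c ` sp_K2_vertices V) = t"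
    then obtain c where w: "worm_coloring (sp_K2_vertices V) (sp_K2_edges V E) c"
      and ct: "card (c ` sp_K2_vertices V) = t" by blast
    show False
    proof (cases "c (v1,True) = c (v1,False)")
      case True
      have m: "\<forall>v\<in>V. c (v,True) = c (v,False)" using all_mono[OF sg cg w v1 True] by blast
      have "proper_coloring V E (\<lambda>v. c (v,True))" unfolding proper_coloring_def
      proof (intro ballI impI)
        fix x y assume "x \<in> V" "y \<in> V" "E x y"
        then show "c (x,True) \<noteq> c (y,True)"
          using mono_prop[OF sg w \<open>E x y\<close>] m by auto
      qed
      then have "chromatic_number V E \<le> card ((\<lambda>v. c (v,True)) ` V)" by (rule chrom_le[OF fin])
      then have "k \<le> card ((\<lambda>v. c (v,True)) ` V)" using assms(5) by simp
      then have "k \<le> t" using ct img_mono[OF m] by simp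
      then show False using that by simp
    next
      case False
      have "\<forall>v\<in>V. {c (v,True), c (v,False)} = {c (v1,True), c (v1,False)}"
        using all_nonmono[OF sg cg w v1 False] by blast
      then have "c ` sp_K2_vertices V \<subseteq> {c (v1,True), c (v1,False)}"
        by (rule img_nonmono)
      then have "card (c ` sp_K2_vertices V) \<le> card {c (v1,True), c (v1,False)}" by (rule card_mono[rotated]) simp
      then have "t \<le> card {c (v1,True), c (v1,False)}" using ct by simp
      also have "\<dots> \<le> 2" by (simp add: card_insert_if)
      finally show False using that by simp
    qed
  qed
  show ?thesis
    apply (intro conjI)
      apply (rule P1)
     apply (intro allI impI)
     apply (rule P2)
    using P3 by blast
qed

end
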